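(* (1) $0$ has exactly one infinite OOCF expansion, namely the constant sequence $(2,-1),(2,-1),\dots$; every $\infty$-rational $x\in(0,1)$ has exactly two infinite OOCF expansions and no finite OOCF expansion, and both infinite expansions are eventually the constant sequence $(2,-1)$. (2) Every $1$-rational $x\in(0,1)$ has no infinite OOCF expansion and exactly two finite OOCF expansions; these have the same length and differ only in their last digit. (3) Every irrational $x\in(0,1)$ has a unique infinite OOCF expansion (and no finite one).
   Context: Rationals are written $p/q$ with $p\in\mathbb Z$, $q\in\mathbb N$, $\gcd(p,q)=1$. A rational $p/q$ is a $1$-rational if $p,q$ are both odd and an $\infty$-rational if $p,q$ have different parity. Admissible digits: $D=\{(1,1)\}\cup\{(a,\varepsilon): a\in\mathbb Z,\ a\ge2,\ \varepsilon\in\{-1,1\}\}$. For integers $k\ge1$ put $B(k+1,-1)=\left[\frac{k-1}{k},\frac{2k-1}{2k+1}\right]$ and $B(k,1)=\left[\frac{2k-1}{2k+1},\frac{k}{k+1}\right]$. The OOCF map $T:[0,1]\to[0,1]$ is $T(x)=\frac{kx-(k-1)}{k-(k+1)x}$ for $x\in B(k+1,-1)$, $T(x)=\frac{k-(k+1)x}{kx-(k-1)}$ for $x\in B(k,1)$ ($k\ge1$; the formulas agree at common endpoints), and $T(1)=1$. An infinite OOCF expansion of $x\in[0,1]$ is a sequence $((a_n,\varepsilon_n))_{n\ge1}$ in $D$ with $T^{n-1}(x)\in B(a_n,\varepsilon_n)$ and $T^{n-1}(x)\neq1$ for all $n\ge1$. A finite OOCF expansion of $x$ of length $N\ge1$ is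 a sequence $((a_n,\varepsilon_n))_{n=1}^N$ in $D$ with $T^{n-1}(x)\in B(a_n,\varepsilon_n)$ and $T^{n-1}(x)\ne1$ for $1\le n\le N$, and $T^N(x)=1$. *)

theory Defs
  imports Complex_Main
begin

definition OOCF_digits :: "(nat \<times> int) set" where
  "OOCF_digits = {(1, 1)} \<union> {(a, e). a \<ge> 2 \<and> (e = -1 \<or> e = 1)}"

definition OOCF_B :: "nat \<Rightarrow> int \<Rightarrow> real set" where
  "OOCF_B a e =
     (if e = -1 \<and> a \<ge> 2 then
        (let k = real (a - 1) in {(k - 1) / k .. (2 * k - 1) / (2 * k + 1)})
      else if e = 1 \<and> a \<ge> 1 then
        (let k = real a in {(2 * k - 1) / (2 * k + 1) .. k / (k + 1)})
      else {})"

text \<open>The OOCF map on [0,1], following the piecewise definition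
 (the relevant k is unique in each branch; formulas agree on common endpoints).\<close>

definition OOCF_T :: "real \<Rightarrow> real" where
  "OOCF_T x =
     (if x = 1 then 1
      else if (\<exists>k::nat. k \<ge> 1 \<and> x \<in> OOCF_B (k + 1) (-1)) then
        (let k = real (SOME k::nat. k \<ge> 1 \<and> x \<in> OOCF_B (k + 1) (-1))
         in (k * x - (k - 1)) / (k - (k + 1) * x))
      else
        (let k = real (SOME k::nat. k \<ge> 1 \<and> x \<in> OOCF_B k 1)
         in (k - (k + 1) * x) / (k * x - (k - 1))))"

text \<open>Infinite OOCF expansion: indexed from 0 (d n is the paper's (a_{n+1}, eps_{n+1})).\<close>

definition inf_OOCF_exp :: "real \<Rightarrow> (nat \<Rightarrow> nat \<times> int) \<Rightarrow> bool" where
  "inf_OOCF_exp x d \<longleftrightarrow>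
     (\<forall>n. d n \<in> OOCF_digits \<and> (OOCF_T ^^ n) x \<in> OOCF_B (fst (d n)) (snd (d n))
          \<and> (OOCF_T ^^ n) x \<noteq> 1)"

definition fin_OOCF_exp :: "real \<Rightarrow> (nat \<times> int) list \<Rightarrow> bool" where
  "fin_OOCF_exp x ds \<longleftrightarrow> length ds \<ge> 1 \<and>
     (\<forall>n < length ds. ds ! n \<in> OOCF_digits
          \<and> (OOCF_T ^^ n) x \<in> OOCF_B (fst (ds ! n)) (snd (ds ! n))
          \<and> (OOCF_T ^^ n) x \<noteq> 1)
     \<and> (OOCF_T ^^ length ds) x = 1"

definition one_rational :: "real \<Rightarrow> bool" where
  "one_rational x \<longleftrightarrow> (\<exists>p q :: int. q > 0 \<and> coprime p q \<and> x = of_int p / of_int q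
                         \<and> odd p \<and> odd q)"

definition infty_rational :: "real \<Rightarrow> bool" where
  "infty_rational x \<longleftrightarrow> (\<exists>p q :: int. q > 0 \<and> coprime p q \<and> x = of_int p / of_int q
                         \<and> (odd p \<noteq> odd q))"

end

theory Submission imports Defs begin

definition g :: "nat \<Rightarrow> real" where "g j = real j / (real j + 2)"

lemma g_less_iff: "g a < g b \<longleftrightarrow> a < b"
  unfolding g_def by (simp add: field_simps)

lemma g_le_iff: "g a \<le> g b \<longleftrightarrow> a \<le> b"
  unfolding g_def by (simp add: field_simps)

lemma g_0[simp]: "g 0 = 0" by (simp add: g_def)
lemma g_lt1: "g j < 1" by (simp add: g_def)
lemma g_ge0: "g j \<ge> 0" by (simp add: g_def)
lemma g_rat: "g j \<in> \<rat>" by (simp add: g_def)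

lemma g_even: "g (2*i) = real i / (real i + 1)"
  unfolding g_def by (simp add: field_simps)
lemma g_odd: "g (2*i+1) = (2*real i + 1) / (2*real i + 3)"
  unfolding g_def by (simp add: field_simps)
lemma g_even2: "g (2*i+2) = (real i + 1) / (real i + 2)"
  unfolding g_def by (simp add: field_simps)

lemma exists_above: assumes "0 \<le> y" "y < 1" shows "\<exists>j. y < g j"
proof -
  define j where "j = nat (ceiling (2*y/(1-y))) + 1"
  have "2*y/(1-y) < real j" unfolding j_def by linarith
  then have "2*y < real j * (1-y)" using assms by (simp add: field_simps)
  then have "y < g j" unfolding g_def using assms by (simp add: field_simps)
  then show ?thesis by blast
qed

definition J :: "real \<Rightarrow> nat set" where
  "J y = {j. 1 \<le> j \<and> g (j-1) \<le> y \<and> y \<le> g j}"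

lemma J_close: assumes "i \<in> J y" "i' \<in> J y" shows "i \<le> i' + 1"
proof -
  have "g (i-1) \<le> g i'" using assms unfolding J_def by auto
  then show ?thesis by (simp add: g_le_iff)
qed

lemma J_g: assumes "m \<ge> 1" shows "J (g m) = {m, m+1}"
proof -
  have "i \<in> {m, m+1}" if "i \<in> J (g m)" for i
  proof -
    have "g (i-1) \<le> g m" "g m \<le> g i" "i \<ge> 1" using that unfolding J_def by auto
    then show ?thesis by (auto simp: g_le_iff)
  qed
  moreover have "m \<in> J (g m)" "m+1 \<in> J (g m)" using assms unfolding J_def by (auto simp: g_le_iff)
  ultimately show ?thesis by blast
qed

lemma J_0: "J 0 = {1}"
proof -
  have "i = 1" if "i \<in> J 0" for i
  proof -
    have "g (i-1) \<le> g 0" "i \<ge> 1" using that unfolding J_def by auto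
    then show ?thesis unfolding g_le_iff by simp
  qed
  moreover have "1 \<in> J 0" unfolding J_def by (auto simp: g_ge0)
  ultimately show ?thesis by blast
qed

lemma J_int: assumes "j \<ge> 1" "g (j-1) < y" "y < g j" shows "J y = {j}"
proof -
  have "i = j" if "i \<in> J y" for i
  proof -
    have "g (i-1) \<le> y" "y \<le> g i" "i \<ge> 1" using that unfolding J_def by auto
    then have "g (i-1) < g j" "g (j-1) < g i" using assms by auto
    then show ?thesis using \<open>i \<ge> 1\<close> \<open>j\<ge>1\<close> by (auto simp: g_less_iff)
  qed
  moreover have "j \<in> J y" using assms unfolding J_def by auto
  ultimately show ?thesis by blast
qed

lemma J_cases:
  assumes "0 \<le> y" "y < 1"
  shows "(y = 0 \<and> J y = {1}) \<or> (\<exists>m\<ge>1. y = g m \<and> J y = {m, m+1})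
     \<or> (\<exists>j\<ge>1. g (j-1) < y \<and> y < g j \<and> J y = {j})"
proof -
  define j where "j = (LEAST j. y < g j)"
  have yj: "y < g j" unfolding j_def using exists_above[OF assms] by (rule LeastI_ex)
  have j1: "j \<ge> 1" using yj assms by (cases j) auto
  have "\<not> y < g (j-1)" unfolding j_def using j1
    by (metis Least_le diff_less j_def less_numeral_extra(1) linorder_not_le order.strict_trans2)
  then have le: "g (j-1) \<le> y" by simp
  show ?thesis
  proof (cases "g (j-1) = y")
    case True
    show ?thesis
    proof (cases "j = 1")
      case True
      then have "y = 0" using \<open>g (j-1) = y\<close> by simp
      then show ?thesis using J_0 by simp
    next
      case False
      then have "j - 1 \<ge> 1" using j1 by simp
      then show ?thesis using J_g[of "j-1"] \<open>g (j-1) = y\<close> j1 by auto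
    qed
  next
    case False
    then have "g (j-1) < y" using le by simp
    then show ?thesis using J_int[OF j1 _ yj] j1 yj by blast
  qed
qed


definition dig :: "nat \<Rightarrow> nat \<times> int" where
  "dig j = (if odd j then ((j+3) div 2, -1) else (j div 2, 1))"

lemma dig_odd: "dig (2*i+1) = (i+2, -1)" unfolding dig_def by simp
lemma dig_even: "dig (2*i+2) = (i+1, 1)" unfolding dig_def by simp

lemma B_minus: "OOCF_B (i+2) (-1) = {g(2*i)..g(2*i+1)}"
  unfolding OOCF_B_def g_even g_odd by (simp add: Let_def algebra_simps)

lemma B_plus: "OOCF_B (i+1) 1 = {g(2*i+1)..g(2*i+2)}"
  unfolding OOCF_B_def g_even2 g_odd by (simp add: Let_def algebra_simps)

lemma j_cases: assumes "(j::nat) \<ge> 1" obtains i where "j = 2*i+1" | i where "j = 2*i+2"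
proof (cases "odd j")
  case True then obtain i where "j = 2*i+1" by (metis oddE)
  then show ?thesis using that by blast
next
  case False then obtain i' where "j = 2*i'" by blast
  with assms have "j = 2*(i'-1)+2" by simp
  then show ?thesis using that by blast
qed

lemma B_dig: assumes "j \<ge> 1" shows "OOCF_B (fst (dig j)) (snd (dig j)) = {g(j-1)..g j}"
  using assms
proof (cases rule: j_cases)
  case (1 i) then show ?thesis by (simp only: dig_odd fst_conv snd_conv B_minus) simp
next
  case (2 i) then show ?thesis by (simp only: dig_even fst_conv snd_conv B_plus) simp
qed

lemma digits_iff: "d \<in> OOCF_digits \<longleftrightarrow> (\<exists>j\<ge>1. d = dig j)"
proof
  assume "d \<in> OOCF_digits"
  then consider "d = (1,1)" | a where "d = (a,-1)" "a \<ge> 2" | a where "d = (a,1)" "a \<ge> 2"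
    unfolding OOCF_digits_def by auto
  then show "\<exists>j\<ge>1. d = dig j"
  proof cases
    case 1 then show ?thesis by (intro exI[of _ 2]) (simp add: dig_def)
  next
    case (2 a) then show ?thesis using dig_odd[of "a-2"] by (intro exI[of _ "2*(a-2)+1"]) auto
  next
    case (3 a) then show ?thesis using dig_even[of "a-1"] by (intro exI[of _ "2*(a-1)+2"]) auto
  qed
next
  assume "\<exists>j\<ge>1. d = dig j"
  then obtain j where j: "j \<ge> 1" "d = dig j" by blast
  from j(1) show "d \<in> OOCF_digits"
  proof (cases rule: j_cases)
    case (1 i) then show ?thesis using j dig_odd[of i] by (simp only:) (simp add: OOCF_digits_def)
  next
    case (2 i) then show ?thesis using j dig_even[of i] by (simp only:) (auto simp add: OOCF_digits_def)
  qed
qed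

lemma dig_inj: "inj dig"
proof (rule injI)
  fix a b assume "dig a = dig b"
  then show "a = b" unfolding dig_def by (auto split: if_splits) presburger+
qed

definition S :: "real \<Rightarrow> (nat \<times> int) set" where
  "S y = {d \<in> OOCF_digits. y \<in> OOCF_B (fst d) (snd d)}"

lemma S_J: "S y = dig ` J y"
proof -
  have "S y = {d. \<exists>j\<ge>1. d = dig j \<and> y \<in> OOCF_B (fst d) (snd d)}"
    unfolding S_def digits_iff by auto
  also have "\<dots> = {d. \<exists>j\<ge>1. d = dig j \<and> y \<in> {g(j-1)..g j}}"
    using B_dig by fastforce
  also have "\<dots> = dig ` J y" unfolding J_def by auto
  finally show ?thesis .
qed

definition Tm :: "real \<Rightarrow> real \<Rightarrow> real" where
  "Tm k y = (k*y - (k-1)) / (k - (k+1)*y)"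
definition Tp :: "real \<Rightarrow> real \<Rightarrow> real" where
  "Tp k y = (k - (k+1)*y) / (k*y - (k-1))"

lemma Bm_iff: "(k \<ge> 1 \<and> y \<in> OOCF_B (k+1) (-1)) \<longleftrightarrow> (\<exists>i. k = i+1 \<and> y \<in> {g(2*i)..g(2*i+1)})"
proof
  assume "k \<ge> 1 \<and> y \<in> OOCF_B (k+1) (-1)"
  then show "\<exists>i. k = i+1 \<and> y \<in> {g(2*i)..g(2*i+1)}"
    using B_minus[of "k-1"] by (intro exI[of _ "k-1"]) (auto simp: numeral_2_eq_2)
next
  assume "\<exists>i. k = i+1 \<and> y \<in> {g(2*i)..g(2*i+1)}"
  then obtain i where "k = i+1" "y \<in> {g(2*i)..g(2*i+1)}" by blast
  then show "k \<ge> 1 \<and> y \<in> OOCF_B (k+1) (-1)" using B_minus[of i] by (simp add: numeral_2_eq_2)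
qed

lemma Bp_iff: "(k \<ge> 1 \<and> y \<in> OOCF_B k 1) \<longleftrightarrow> (\<exists>i. k = i+1 \<and> y \<in> {g(2*i+1)..g(2*i+2)})"
proof
  assume "k \<ge> 1 \<and> y \<in> OOCF_B k 1"
  then show "\<exists>i. k = i+1 \<and> y \<in> {g(2*i+1)..g(2*i+2)}"
    using B_plus[of "k-1"] by (intro exI[of _ "k-1"]) auto
next
  assume "\<exists>i. k = i+1 \<and> y \<in> {g(2*i+1)..g(2*i+2)}"
  then obtain i where "k = i+1" "y \<in> {g(2*i+1)..g(2*i+2)}" by blast
  then show "k \<ge> 1 \<and> y \<in> OOCF_B k 1" using B_plus[of i] by simp
qed

lemma inJ: "y \<in> {g(j-1)..g j} \<Longrightarrow> j \<ge> 1 \<Longrightarrow> j \<in> J y" unfolding J_def by auto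

lemma T_minus: assumes "y \<in> {g(2*i)..g(2*i+1)}" shows "OOCF_T y = Tm (real i + 1) y"
proof -
  have y1: "y \<noteq> 1" using assms g_lt1[of "2*i+1"] by auto
  have ex: "\<exists>k::nat. k \<ge> 1 \<and> y \<in> OOCF_B (k + 1) (-1)" using Bm_iff[of "i+1" y] assms by blast
  define k0 where "k0 = (SOME k::nat. k \<ge> 1 \<and> y \<in> OOCF_B (k + 1) (-1))"
  have "k0 \<ge> 1 \<and> y \<in> OOCF_B (k0 + 1) (-1)" unfolding k0_def using someI_ex[OF ex] .
  then obtain i0 where i0: "k0 = i0+1" "y \<in> {g(2*i0)..g(2*i0+1)}" using Bm_iff by blast
  have "2*i0+1 \<in> J y" "2*i+1 \<in> J y" using i0 assms by (auto intro!: inJ)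
  then have "2*i0+1 \<le> 2*i+1+1" "2*i+1 \<le> 2*i0+1+1" using J_close by blast+
  then have "i0 = i" by simp
  then show ?thesis using y1 ex i0 unfolding OOCF_T_def k0_def[symmetric] Tm_def Let_def
    by (simp add: algebra_simps)
qed

lemma Tm_right: "Tm (real i + 1) (g (2*i+1)) = 1"
  unfolding Tm_def g_odd by (simp add: field_simps)
lemma Tm_left: "Tm (real i + 1) (g (2*i)) = 0"
  unfolding Tm_def g_even by (simp add: field_simps)
lemma Tp_left: "Tp (real i + 1) (g (2*i+1)) = 1"
  unfolding Tp_def g_odd by (simp add: field_simps)
lemma Tp_right: "Tp (real i + 1) (g (2*i+2)) = 0"
  unfolding Tp_def g_even2 by (simp add: field_simps)

lemma T_plus: assumes "y \<in> {g(2*i+1)..g(2*i+2)}" shows "OOCF_T y = Tp (real i + 1) y"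
proof -
  have y1: "y \<noteq> 1" using assms g_lt1[of "2*i+2"] by auto
  show ?thesis
  proof (cases "\<exists>k::nat. k \<ge> 1 \<and> y \<in> OOCF_B (k + 1) (-1)")
    case ex: True
    define k0 where "k0 = (SOME k::nat. k \<ge> 1 \<and> y \<in> OOCF_B (k + 1) (-1))"
    have "k0 \<ge> 1 \<and> y \<in> OOCF_B (k0 + 1) (-1)" unfolding k0_def using someI_ex[OF ex] .
    then obtain i0 where i0: "k0 = i0+1" "y \<in> {g(2*i0)..g(2*i0+1)}" using Bm_iff by blast
    have T: "OOCF_T y = Tm (real i0 + 1) y"
      using y1 ex i0 unfolding OOCF_T_def k0_def[symmetric] Tm_def Let_def by (simp add: algebra_simps)
    have "2*i0+1 \<in> J y" "2*i+2 \<in> J y" using i0 assms by (auto intro!: inJ)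
    then have "2*i0+1 \<le> 2*i+2+1" "2*i+2 \<le> 2*i0+1+1" using J_close by blast+
    then consider "i0 = i" | "i0 = i+1" by linarith
    then show ?thesis
    proof cases
      case 1
      then have "y = g (2*i+1)" using i0 assms by auto
      then show ?thesis using T 1 Tm_right Tp_left by simp
    next
      case 2
      then have "y = g (2*i+2)" using i0 assms by (auto simp: algebra_simps)
      then show ?thesis using T 2 Tm_left[of "i+1"] Tp_right[of i]
        by (simp add: algebra_simps)
    qed
  next
    case nex: False
    have ex: "\<exists>k::nat. k \<ge> 1 \<and> y \<in> OOCF_B k 1" using Bp_iff[of "i+1" y] assms by blast
    define k0 where "k0 = (SOME k::nat. k \<ge> 1 \<and> y \<in> OOCF_B k 1)"
    have "k0 \<ge> 1 \<and> y \<in> OOCF_B k0 1" unfolding k0_def using someI_ex[OF ex] .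
    then obtain i0 where i0: "k0 = i0+1" "y \<in> {g(2*i0+1)..g(2*i0+2)}" using Bp_iff by blast
    have "2*i0+2 \<in> J y" "2*i+2 \<in> J y" using i0 assms by (auto intro!: inJ)
    then have "2*i0+2 \<le> 2*i+2+1" "2*i+2 \<le> 2*i0+2+1" using J_close by blast+
    then have "i0 = i" by simp
    have "OOCF_T y = (let k = real k0 in (k - (k + 1) * y) / (k * y - (k - 1)))"
      unfolding OOCF_T_def if_not_P[OF y1] if_not_P[OF nex] k0_def by (rule refl)
    then show ?thesis using \<open>i0 = i\<close> i0 unfolding Tp_def Let_def
      by (simp add: algebra_simps)
  qed
qed


lemma mem_m:
  assumes "y \<in> {g(2*i)..g(2*i+1)}"
  shows "real i \<le> real i * y + y" "2 * real i * y + 3 * y \<le> 2 * real i + 1" "0 \<le> y" "y < 1"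
proof -
  have y0: "0 \<le> y" "y < 1" using assms g_ge0[of "2*i"] g_lt1[of "2*i+1"] by auto
  have "real i / (real i + 1) \<le> y" using assms g_even by auto
  then show "real i \<le> real i * y + y" by (simp add: divide_le_eq algebra_simps)
  have "y \<le> (2*real i + 1) / (2*real i + 3)" using assms g_odd by auto
  then show "2 * real i * y + 3 * y \<le> 2 * real i + 1" by (simp add: le_divide_eq algebra_simps)
  show "0 \<le> y" "y < 1" by fact+
qed

lemma mem_p:
  assumes "y \<in> {g(2*i+1)..g(2*i+2)}"
  shows "2 * real i + 1 \<le> 2 * real i * y + 3 * y" "real i * y + 2 * y \<le> real i + 1" "0 \<le> y" "y < 1"
proof -
  have y0: "0 \<le> y" "y < 1" using assms g_ge0[of "2*i+1"] g_lt1[of "2*i+2"] by auto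
  have "(2*real i + 1) / (2*real i + 3) \<le> y" using assms g_odd by auto
  then show "2 * real i + 1 \<le> 2 * real i * y + 3 * y" by (simp add: divide_le_eq algebra_simps)
  have "y \<le> (real i + 1) / (real i + 2)" using assms g_even2 by auto
  then show "real i * y + 2 * y \<le> real i + 1" by (simp add: le_divide_eq algebra_simps)
  show "0 \<le> y" "y < 1" by fact+
qed

lemma den_m: assumes "y \<in> {g(2*i)..g(2*i+1)}" shows "0 < (real i + 1) - (real i + 1 + 1) * y"
  using mem_m[OF assms] by (simp add: algebra_simps)

lemma den_p: assumes "y \<in> {g(2*i+1)..g(2*i+2)}" shows "0 < (real i + 1) * y - (real i + 1 - 1)"
  using mem_p[OF assms] by (simp add: algebra_simps)

lemma Tm_bounds: assumes "y \<in> {g(2*i)..g(2*i+1)}"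
  shows "0 \<le> Tm (real i + 1) y" "Tm (real i + 1) y \<le> 1"
  using mem_m[OF assms] den_m[OF assms] unfolding Tm_def
  by (simp_all add: divide_le_eq algebra_simps)

lemma Tm_strict: assumes "g(2*i) < y" "y < g(2*i+1)"
  shows "0 < Tm (real i + 1) y" "Tm (real i + 1) y < 1"
proof -
  have m: "y \<in> {g(2*i)..g(2*i+1)}" using assms by auto
  have "real i / (real i + 1) < y" using assms g_even by auto
  then have a: "real i < real i * y + y" by (simp add: divide_less_eq algebra_simps)
  have "y < (2*real i + 1) / (2*real i + 3)" using assms g_odd by auto
  then have b: "2 * real i * y + 3 * y < 2 * real i + 1" by (simp add: less_divide_eq algebra_simps)
  show "0 < Tm (real i + 1) y" "Tm (real i + 1) y < 1"
    using a b den_m[OF m] unfolding Tm_def by (simp_all add: divide_less_eq algebra_simps)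
qed

lemma Tp_bounds: assumes "y \<in> {g(2*i+1)..g(2*i+2)}"
  shows "0 \<le> Tp (real i + 1) y" "Tp (real i + 1) y \<le> 1"
  using mem_p[OF assms] den_p[OF assms] unfolding Tp_def
  by (simp_all add: divide_le_eq algebra_simps)

lemma Tp_strict: assumes "g(2*i+1) < y" "y < g(2*i+2)"
  shows "0 < Tp (real i + 1) y" "Tp (real i + 1) y < 1"
proof -
  have m: "y \<in> {g(2*i+1)..g(2*i+2)}" using assms by auto
  have "(2*real i + 1) / (2*real i + 3) < y" using assms g_odd by auto
  then have a: "2 * real i + 1 < 2 * real i * y + 3 * y" by (simp add: divide_less_eq algebra_simps)
  have "y < (real i + 1) / (real i + 2)" using assms g_even2 by auto
  then have b: "real i * y + 2 * y < real i + 1" by (simp add: less_divide_eq algebra_simps)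
  show "0 < Tp (real i + 1) y" "Tp (real i + 1) y < 1"
    using a b den_p[OF m] unfolding Tp_def by (simp_all add: divide_less_eq algebra_simps)
qed

lemma locate: assumes "0 \<le> y" "y < 1" shows "\<exists>j\<ge>1. y \<in> {g(j-1)..g j}"
  using J_cases[OF assms] unfolding J_def by auto

lemma T_range: assumes "0 \<le> y" "y \<le> 1" shows "0 \<le> OOCF_T y \<and> OOCF_T y \<le> 1"
proof (cases "y = 1")
  case True then show ?thesis unfolding OOCF_T_def by simp
next
  case False
  then obtain j where j: "j \<ge> 1" "y \<in> {g(j-1)..g j}" using locate assms by force
  from j(1) show ?thesis
  proof (cases rule: j_cases)
    case (1 i) then show ?thesis using j T_minus[of y i] Tm_bounds[of y i] by auto
  next
    case (2 i) then show ?thesis using j T_plus[of y i] Tp_bounds[of y i] by auto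
  qed
qed

lemma T_int: assumes "j \<ge> 1" "g (j-1) < y" "y < g j" shows "0 < OOCF_T y \<and> OOCF_T y < 1"
  using assms(1)
proof (cases rule: j_cases)
  case (1 i) then show ?thesis using assms T_minus[of y i] Tm_strict[of i y] by auto
next
  case (2 i) then show ?thesis using assms T_plus[of y i] Tp_strict[of i y] by auto
qed

lemma T_g: assumes "m \<ge> 1" shows "OOCF_T (g m) = 0 \<or> OOCF_T (g m) = 1"
  using assms
proof (cases rule: j_cases)
  case (1 i) then show ?thesis using T_minus[of "g m" i] Tm_right[of i] g_le_iff by auto
next
  case (2 i) then show ?thesis using T_plus[of "g m" i] Tp_right[of i] g_le_iff by auto
qed

lemma T_0[simp]: "OOCF_T 0 = 0"
  using T_minus[of 0 0] Tm_left[of 0] by (simp add: g_ge0)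

lemma T_1[simp]: "OOCF_T 1 = 1" unfolding OOCF_T_def by simp

lemma T_rat: assumes "0 \<le> y" "y < 1" "OOCF_T y \<in> \<rat>" shows "y \<in> \<rat>"
proof -
  obtain j where j: "j \<ge> 1" "y \<in> {g(j-1)..g j}" using locate assms by force
  from j(1) show ?thesis
  proof (cases rule: j_cases)
    case (1 i)
    define K where "K = real i + 1"
    define r where "r = OOCF_T y"
    have m: "y \<in> {g(2*i)..g(2*i+1)}" using j 1 by auto
    have r: "r = (K*y - (K-1)) / (K - (K+1)*y)" using T_minus[OF m] unfolding r_def K_def Tm_def .
    have r0: "r \<ge> 0" using Tm_bounds[OF m] T_minus[OF m] unfolding r_def by simp
    have d: "K - (K+1)*y > 0" using den_m[OF m] unfolding K_def .
    have "r * (K - (K+1)*y) = K*y - (K-1)" using r d by simp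
    then have "y * (K + r*(K+1)) = r*K + K - 1" by (simp add: algebra_simps)
    moreover have "K + r*(K+1) > 0" using r0 unfolding K_def by (simp add: add_pos_nonneg)
    ultimately have "y = (r*K + K - 1) / (K + r*(K+1))" by (simp add: field_simps)
    moreover have "r \<in> \<rat>" "K \<in> \<rat>" using assms(3) unfolding r_def K_def by auto
    ultimately show ?thesis by simp
  next
    case (2 i)
    define K where "K = real i + 1"
    define r where "r = OOCF_T y"
    have m: "y \<in> {g(2*i+1)..g(2*i+2)}" using j 2 by auto
    have r: "r = (K - (K+1)*y) / (K*y - (K-1))" using T_plus[OF m] unfolding r_def K_def Tp_def .
    have r0: "r \<ge> 0" using Tp_bounds[OF m] T_plus[OF m] unfolding r_def by simp
    have d: "K*y - (K-1) > 0" using den_p[OF m] unfolding K_def .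
    have "r * (K*y - (K-1)) = K - (K+1)*y" using r d by simp
    then have "y * (r*K + K + 1) = K + r*(K-1)" by (simp add: algebra_simps)
    moreover have "r*K + K + 1 > 0" using r0 unfolding K_def by (simp add: add_pos_nonneg)
    ultimately have "y = (K + r*(K-1)) / (r*K + K + 1)" by (simp add: field_simps)
    moreover have "r \<in> \<rat>" "K \<in> \<rat>" using assms(3) unfolding r_def K_def by auto
    ultimately show ?thesis by simp
  qed
qed


lemma par: fixes K p q :: int
  shows "(odd p \<and> odd q \<longrightarrow> odd (K*p - (K-1)*q) \<and> odd (K*q - (K+1)*p))
    \<and> (odd p \<noteq> odd q \<longrightarrow> odd (K*p - (K-1)*q) \<noteq> odd (K*q - (K+1)*p))"
  by (cases "even K") (auto simp: even_mult_iff)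

lemma step:
  assumes y: "0 < y" "y < 1" "y = of_int p / of_int q" and q: "q > 0"
  shows "\<exists>p' q'. 0 < q' \<and> q' < q \<and> OOCF_T y = of_int p' / of_int q'
     \<and> (odd p \<and> odd q \<longrightarrow> odd p' \<and> odd q') \<and> (odd p \<noteq> odd q \<longrightarrow> odd p' \<noteq> odd q')"
proof -
  obtain j where j: "j \<ge> 1" "y \<in> {g(j-1)..g j}" using locate[of y] y(1) y(2) by auto
  have qr: "real_of_int q > 0" using q by simp
  have pq: "of_int p = y * of_int q" using y(3) qr by simp
  from j(1) show ?thesis
  proof (cases rule: j_cases)
    case (1 i)
    define K :: int where "K = int i + 1"
    have m: "y \<in> {g(2*i)..g(2*i+1)}" using j 1 by auto
    define p' where "p' = K*p - (K-1)*q"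
    define q' where "q' = K*q - (K+1)*p"
    have Kr: "real_of_int K = real i + 1" unfolding K_def by simp
    have ep: "real_of_int p' = of_int q * ((real i + 1)*y - (real i + 1 - 1))"
      unfolding p'_def using pq Kr by (simp add: algebra_simps)
    have eq: "real_of_int q' = of_int q * ((real i + 1) - (real i + 1 + 1)*y)"
      unfolding q'_def using pq Kr by (simp add: algebra_simps)
    have d: "0 < (real i + 1) - (real i + 1 + 1) * y" by (rule den_m[OF m])
    have "real_of_int q' > 0" using eq d qr by simp
    then have q'0: "q' > 0" by simp
    have "real i \<le> real i * y + y" using mem_m[OF m] by simp
    then have "(real i + 1) - (real i + 1 + 1)*y < 1" using y(1) by (simp add: algebra_simps)
    then have "real_of_int q' < real_of_int q" using eq qr
      by (metis mult.right_neutral mult_strict_left_mono)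
    then have "q' < q" by simp
    moreover have "OOCF_T y = of_int p' / of_int q'"
      using T_minus[OF m] ep eq qr unfolding Tm_def by simp
    ultimately show ?thesis using q'0 par[of p q K] unfolding p'_def q'_def by blast
  next
    case (2 i)
    define K :: int where "K = int i + 1"
    have m: "y \<in> {g(2*i+1)..g(2*i+2)}" using j 2 by auto
    define p' where "p' = K*q - (K+1)*p"
    define q' where "q' = K*p - (K-1)*q"
    have Kr: "real_of_int K = real i + 1" unfolding K_def by simp
    have ep: "real_of_int p' = of_int q * ((real i + 1) - (real i + 1 + 1)*y)"
      unfolding p'_def using pq Kr by (simp add: algebra_simps)
    have eq: "real_of_int q' = of_int q * ((real i + 1)*y - (real i + 1 - 1))"
      unfolding q'_def using pq Kr by (simp add: algebra_simps)
    have d: "0 < (real i + 1) * y - (real i + 1 - 1)" by (rule den_p[OF m])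
    have "real_of_int q' > 0" using eq d qr by simp
    then have q'0: "q' > 0" by simp
    have "(real i + 1) * y < (real i + 1) * 1" using y(2) by (intro mult_strict_left_mono) auto
    then have "(real i + 1) * y - (real i + 1 - 1) < 1" by (simp add: algebra_simps)
    then have "real_of_int q' < real_of_int q" using eq qr
      by (metis mult.right_neutral mult_strict_left_mono)
    then have "q' < q" by simp
    moreover have "OOCF_T y = of_int p' / of_int q'"
      using T_plus[OF m] ep eq qr unfolding Tp_def by simp
    ultimately show ?thesis using q'0 par[of p q K] unfolding p'_def q'_def by blast
  qed
qed

definition Q1 :: "real \<Rightarrow> bool" where
  "Q1 y \<longleftrightarrow> (\<exists>p q. q > 0 \<and> y = of_int p / of_int q \<and> odd p \<and> odd q)"
definition Qi :: "real \<Rightarrow> bool" where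
  "Qi y \<longleftrightarrow> (\<exists>p q. q > 0 \<and> y = of_int p / of_int q \<and> odd p \<noteq> odd q)"

lemma Q1_ne0: "Q1 y \<Longrightarrow> y \<noteq> 0" unfolding Q1_def by auto
lemma Qi_ne1: "Qi y \<Longrightarrow> y \<noteq> 1" unfolding Qi_def by auto

lemma Q1_T: assumes "0 \<le> y" "y \<le> 1" "Q1 y" shows "Q1 (OOCF_T y)"
proof (cases "y = 1")
  case True then show ?thesis using assms by simp
next
  case False
  with assms Q1_ne0 have "0 < y" "y < 1" by force+
  obtain p q where "q > 0" "y = of_int p / of_int q" "odd p" "odd q" using assms(3) Q1_def by auto
  then show ?thesis using step[OF \<open>0 < y\<close> \<open>y < 1\<close>] unfolding Q1_def by metis
qed

lemma Qi_T: assumes "0 \<le> y" "y \<le> 1" "Qi y" shows "Qi (OOCF_T y)"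
proof (cases "y = 0")
  case True then show ?thesis using assms by simp
next
  case False
  with assms Qi_ne1 have "0 < y" "y < 1" by force+
  obtain p q where "q > 0" "y = of_int p / of_int q" "odd p \<noteq> odd q" using assms(3) Qi_def by auto
  then show ?thesis using step[OF \<open>0 < y\<close> \<open>y < 1\<close>] unfolding Qi_def by metis
qed

lemma reach_aux: "\<forall>p (y::real). 0 < q \<longrightarrow> 0 \<le> y \<longrightarrow> y \<le> 1 \<longrightarrow> y = of_int p / of_int q \<longrightarrow>
    (\<exists>n. (OOCF_T ^^ n) y = 0 \<or> (OOCF_T ^^ n) y = 1)"
proof (induction "nat q" arbitrary: q rule: less_induct)
  case less
  show ?case
  proof (intro allI impI)
    fix p and y :: real assume h: "0 < q" "0 \<le> y" "y \<le> 1" "y = of_int p / of_int q"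
    show "\<exists>n. (OOCF_T ^^ n) y = 0 \<or> (OOCF_T ^^ n) y = 1"
    proof (cases "y = 0 \<or> y = 1")
      case True then show ?thesis by (intro exI[of _ 0]) auto
    next
      case False
      have "0 < y" using h(2) False by linarith
      have "y < 1" using h(3) False by linarith
      from step[OF \<open>0 < y\<close> \<open>y < 1\<close> h(4) h(1)] obtain p' q' where
        s: "0 < q'" "q' < q" "OOCF_T y = of_int p' / of_int q'" by blast
      have r: "0 \<le> OOCF_T y" "OOCF_T y \<le> 1" using T_range h by auto
      have "nat q' < nat q" using s by simp
      from less[OF this] s r obtain n where
        "(OOCF_T ^^ n) (OOCF_T y) = 0 \<or> (OOCF_T ^^ n) (OOCF_T y) = 1" by blast
      then show ?thesis by (intro exI[of _ "Suc n"]) (simp add: funpow_Suc_right del: funpow.simps)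
    qed
  qed
qed

lemma rat_reach: assumes "y \<in> \<rat>" "0 \<le> y" "y \<le> 1"
  shows "\<exists>n. (OOCF_T ^^ n) y = 0 \<or> (OOCF_T ^^ n) y = 1"
proof -
  obtain p q where "q > 0" "y = of_int p / of_int q"
    using assms(1) by (metis Rats_cases')
  then show ?thesis using reach_aux assms by blast
qed


abbreviation orb :: "real \<Rightarrow> nat \<Rightarrow> real" where "orb x n \<equiv> (OOCF_T ^^ n) x"

lemma O_Suc: "orb x (Suc n) = OOCF_T (orb x n)" by simp

lemma O_range: "0 \<le> x \<Longrightarrow> x \<le> 1 \<Longrightarrow> 0 \<le> orb x n \<and> orb x n \<le> 1"
  by (induction n) (auto dest: T_range)

lemma S_single: assumes "0 < y" "y < 1" "0 < OOCF_T y" "OOCF_T y < 1" shows "\<exists>s. S y = {s}"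
proof -
  from J_cases[of y] assms consider (g) m where "m \<ge> 1" "y = g m" "J y = {m, m+1}"
    | (i) j where "j\<ge>1" "g (j-1) < y" "y < g j" "J y = {j}" by auto
  then show ?thesis
  proof cases
    case g then show ?thesis using T_g[of m] assms by auto
  next
    case i then show ?thesis by (simp add: S_J)
  qed
qed

lemma S_pair: assumes "0 < y" "y < 1" "OOCF_T y = 0 \<or> OOCF_T y = 1"
  shows "\<exists>u v. u \<noteq> v \<and> S y = {u, v}"
proof -
  from J_cases[of y] assms consider (g) m where "m \<ge> 1" "y = g m" "J y = {m, m+1}"
    | (i) j where "j\<ge>1" "g (j-1) < y" "y < g j" "J y = {j}" by auto
  then show ?thesis
  proof cases
    case g
    have "dig m \<noteq> dig (m+1)" using dig_inj by (metis inj_eq n_not_Suc_n Suc_eq_plus1)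
    moreover have "S y = {dig m, dig (m+1)}" using g by (simp add: S_J)
    ultimately show ?thesis by blast
  next
    case i then show ?thesis using T_int[of j y] assms by auto
  qed
qed

lemma S_0: "S 0 = {(2,-1)}"
  by (simp add: S_J J_0 dig_def)

lemma S_irr: assumes "0 < y" "y < 1" "y \<notin> \<rat>" shows "\<exists>s. S y = {s}"
proof -
  from J_cases[of y] assms consider (g) m where "m \<ge> 1" "y = g m" "J y = {m, m+1}"
    | (i) j where "j\<ge>1" "g (j-1) < y" "y < g j" "J y = {j}" by auto
  then show ?thesis
  proof cases
    case g then show ?thesis using g_rat[of m] assms by auto
  next
    case i then show ?thesis by (simp add: S_J)
  qed
qed

lemma inf_iff: "inf_OOCF_exp x d \<longleftrightarrow> (\<forall>n. d n \<in> S (orb x n) \<and> orb x n \<noteq> 1)"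
  unfolding inf_OOCF_exp_def S_def by auto

lemma fin_iff: "fin_OOCF_exp x ds \<longleftrightarrow> length ds \<ge> 1 \<and>
   (\<forall>n<length ds. ds ! n \<in> S (orb x n) \<and> orb x n \<noteq> 1) \<and> orb x (length ds) = 1"
  unfolding fin_OOCF_exp_def S_def by auto

lemma G1: assumes "\<And>n. A n = {s n}" shows "{d. \<forall>n. d n \<in> A n} = {s}"
  using assms by auto

lemma G2: assumes "\<And>n. n \<noteq> m \<Longrightarrow> A n = {s n}" "A m = {u, v}" "u \<noteq> v"
  shows "{d. \<forall>n. d n \<in> A n} = {s(m:=u), s(m:=v)}" "s(m:=u) \<noteq> s(m:=v)"
proof -
  show "s(m:=u) \<noteq> s(m:=v)" using assms(3) by (metis fun_upd_same)
  show "{d. \<forall>n. d n \<in> A n} = {s(m:=u), s(m:=v)}"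
  proof (intro equalityI subsetI)
    fix d assume "d \<in> {d. \<forall>n. d n \<in> A n}"
    then have d: "\<And>n. d n \<in> A n" by auto
    have "\<And>n. n \<noteq> m \<Longrightarrow> d n = s n" using d assms(1) by blast
    moreover have "d m = u \<or> d m = v" using d[of m] assms(2) by auto
    ultimately have "d = s(m:=u) \<or> d = s(m:=v)" by (metis fun_upd_apply ext)
    then show "d \<in> {s(m:=u), s(m:=v)}" by blast
  next
    fix d assume "d \<in> {s(m:=u), s(m:=v)}"
    then show "d \<in> {d. \<forall>n. d n \<in> A n}" using assms(1,2) by auto
  qed
qed

lemma G3: assumes "N \<ge> 1" "\<And>n. n < N - 1 \<Longrightarrow> A n = {s n}" "A (N-1) = {u, v}" "u \<noteq> v"
  shows "{ds. length ds = N \<and> (\<forall>n<N. ds ! n \<in> A n)} =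
      {map s [0..<N-1] @ [u], map s [0..<N-1] @ [v]}"
    "map s [0..<N-1] @ [u] \<noteq> map s [0..<N-1] @ [v]"
proof -
  define cs where "cs = map s [0..<N-1]"
  have lcs: "length cs = N - 1" unfolding cs_def by simp
  show "map s [0..<N-1] @ [u] \<noteq> map s [0..<N-1] @ [v]" using assms(4) by simp
  show "{ds. length ds = N \<and> (\<forall>n<N. ds ! n \<in> A n)} =
      {map s [0..<N-1] @ [u], map s [0..<N-1] @ [v]}"
    unfolding cs_def[symmetric]
  proof (intro equalityI subsetI)
    fix ds assume "ds \<in> {ds. length ds = N \<and> (\<forall>n<N. ds ! n \<in> A n)}"
    then have l: "length ds = N" and d: "\<And>n. n < N \<Longrightarrow> ds ! n \<in> A n" by auto
    have ne: "ds \<noteq> []" using l assms(1) by auto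
    have b: "butlast ds = cs"
    proof (rule nth_equalityI)
      show "length (butlast ds) = length cs" using l lcs by simp
      fix n assume "n < length (butlast ds)"
      then have n: "n < N - 1" using l by simp
      then have "ds ! n = s n" using d[of n] assms(2)[OF n] by auto
      then show "butlast ds ! n = cs ! n" using n l unfolding cs_def by (simp add: nth_butlast)
    qed
    have "last ds = ds ! (N-1)" using ne l by (simp add: last_conv_nth)
    then have "last ds = u \<or> last ds = v" using d[of "N-1"] assms(1,3) by auto
    moreover have "ds = butlast ds @ [last ds]" using ne by simp
    ultimately show "ds \<in> {cs @ [u], cs @ [v]}" using b by auto
  next
    fix ds assume "ds \<in> {cs @ [u], cs @ [v]}"
    then obtain w where w: "ds = cs @ [w]" "w \<in> A (N-1)" using assms(3) by auto
    have "length ds = N" using w lcs assms(1) by simp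
    moreover have "ds ! n \<in> A n" if "n < N" for n
    proof (cases "n < N - 1")
      case True then show ?thesis using w assms(2)[OF True] lcs unfolding cs_def by (simp add: nth_append)
    next
      case False then have "n = N - 1" using that by simp
      then show ?thesis using w lcs by (simp add: nth_append)
    qed
    ultimately show "ds \<in> {ds. length ds = N \<and> (\<forall>n<N. ds ! n \<in> A n)}" by auto
  qed
qed


lemma orb_0: "orb 0 n = 0" by (induction n) auto

lemma part0: "{d. inf_OOCF_exp 0 d} = {(\<lambda>_. (2, -1))}"
proof -
  have "{d. inf_OOCF_exp 0 d} = {d. \<forall>n. d n \<in> (\<lambda>n. S 0) n}"
    unfolding inf_iff orb_0 by simp
  also have "\<dots> = {(\<lambda>_. (2, -1))}" by (rule G1) (simp add: S_0)
  finally show ?thesis .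
qed

lemma orb_add: "orb x (m + n) = orb (orb x m) n"
  by (metis add.commute comp_apply funpow_add)

lemma part_inf:
  assumes x: "0 < x" "x < 1" and ir: "infty_rational x"
  shows "card {d. inf_OOCF_exp x d} = 2 \<and> {ds. fin_OOCF_exp x ds} = {}
          \<and> (\<forall>d. inf_OOCF_exp x d \<longrightarrow> (\<exists>N. \<forall>n\<ge>N. d n = (2, -1)))"
proof -
  have Qx: "Qi x" using ir unfolding infty_rational_def Qi_def by auto
  have xr: "x \<in> \<rat>" using ir unfolding infty_rational_def by auto
  have rng: "\<And>n. 0 \<le> orb x n \<and> orb x n \<le> 1" using O_range x by auto
  have Qn: "\<And>n. Qi (orb x n)"
  proof -
    fix n show "Qi (orb x n)" by (induction n) (use Qx rng Qi_T in auto)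
  qed
  have ne1: "\<And>n. orb x n \<noteq> 1" using Qn Qi_ne1 by blast
  obtain n0 where "orb x n0 = 0 \<or> orb x n0 = 1" using rat_reach[OF xr] x by auto
  then have ex: "\<exists>n. orb x n = 0" using ne1 by blast
  define N where "N = (LEAST n. orb x n = 0)"
  have ON: "orb x N = 0" unfolding N_def using ex by (rule LeastI_ex)
  have bef: "\<And>n. n < N \<Longrightarrow> orb x n \<noteq> 0" unfolding N_def using not_less_Least by blast
  have N1: "N \<ge> 1" using ON x by (cases N) auto
  have aft: "\<And>n. n \<ge> N \<Longrightarrow> orb x n = 0"
  proof -
    fix n assume "n \<ge> N"
    then obtain k where "n = N + k" using le_Suc_ex by blast
    then show "orb x n = 0" using ON orb_add orb_0 by simp
  qed
  have open01: "\<And>n. n < N \<Longrightarrow> 0 < orb x n \<and> orb x n < 1"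
    using bef rng ne1 by (metis order_le_less)
  have single: "\<exists>s. S (orb x n) = {s}" if "n \<noteq> N - 1" for n
  proof (cases "n < N")
    case True
    then have "n + 1 < N" using that by simp
    then have "0 < OOCF_T (orb x n)" "OOCF_T (orb x n) < 1" using open01[of "n+1"] by auto
    then show ?thesis using S_single open01[OF True] by blast
  next
    case False then show ?thesis using aft[of n] S_0 by auto
  qed
  have "N - 1 < N" using N1 by simp
  have "OOCF_T (orb x (N-1)) = 0" using ON N1 by (metis O_Suc Suc_diff_1 less_le_trans zero_less_one)
  then obtain u v where uv: "u \<noteq> v" "S (orb x (N-1)) = {u, v}"
    using S_pair open01[OF \<open>N - 1 < N\<close>] by blast
  obtain s where s: "\<And>n. n \<noteq> N - 1 \<Longrightarrow> S (orb x n) = {s n}"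
    using single by metis
  have set: "{d. inf_OOCF_exp x d} = {d. \<forall>n. d n \<in> S (orb x n)}"
    unfolding inf_iff using ne1 by simp
  have e: "{d. \<forall>n. d n \<in> S (orb x n)} = {s(N-1:=u), s(N-1:=v)}"
    using G2(1)[of "N-1" "\<lambda>n. S (orb x n)" s u v, OF s uv(2,1)] by simp
  have "card {d. inf_OOCF_exp x d} = 2"
    unfolding set e using G2(2)[of "N-1" "\<lambda>n. S (orb x n)" s u v, OF s uv(2,1)] by simp
  moreover have "{ds. fin_OOCF_exp x ds} = {}" unfolding fin_iff using ne1 by auto
  moreover have "\<forall>d. inf_OOCF_exp x d \<longrightarrow> (\<exists>N. \<forall>n\<ge>N. d n = (2, -1))"
  proof (intro allI impI)
    fix d assume "inf_OOCF_exp x d"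
    then have "\<And>n. d n \<in> S (orb x n)" unfolding inf_iff by auto
    then have "\<forall>n\<ge>N. d n = (2, -1)" using aft S_0 by (metis singletonD)
    then show "\<exists>N. \<forall>n\<ge>N. d n = (2, -1)" by blast
  qed
  ultimately show ?thesis by blast
qed

lemma part_one:
  assumes x: "0 < x" "x < 1" and ir: "one_rational x"
  shows "{d. inf_OOCF_exp x d} = {}
          \<and> card {ds. fin_OOCF_exp x ds} = 2
          \<and> (\<forall>ds es. fin_OOCF_exp x ds \<and> fin_OOCF_exp x es \<and> ds \<noteq> es \<longrightarrow>
                length ds = length es \<and> butlast ds = butlast es)"
proof -
  have Qx: "Q1 x" using ir unfolding one_rational_def Q1_def by auto
  have xr: "x \<in> \<rat>" using ir unfolding one_rational_def by auto
  have rng: "\<And>n. 0 \<le> orb x n \<and> orb x n \<le> 1" using O_range x by auto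
  have Qn: "\<And>n. Q1 (orb x n)"
  proof -
    fix n show "Q1 (orb x n)" by (induction n) (use Qx rng Q1_T in auto)
  qed
  have ne0: "\<And>n. orb x n \<noteq> 0" using Qn Q1_ne0 by blast
  obtain n0 where "orb x n0 = 0 \<or> orb x n0 = 1" using rat_reach[OF xr] x by auto
  then have ex: "\<exists>n. orb x n = 1" using ne0 by blast
  define N where "N = (LEAST n. orb x n = 1)"
  have ON: "orb x N = 1" unfolding N_def using ex by (rule LeastI_ex)
  have bef: "\<And>n. n < N \<Longrightarrow> orb x n \<noteq> 1" unfolding N_def using not_less_Least by blast
  have N1: "N \<ge> 1" using ON x by (cases N) auto
  have open01: "\<And>n. n < N \<Longrightarrow> 0 < orb x n \<and> orb x n < 1"
    using bef rng ne0 by (metis order_le_less)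
  have single: "\<exists>s. S (orb x n) = {s}" if "n < N - 1" for n
  proof -
    have "n + 1 < N" "n < N" using that by simp_all
    then have "0 < OOCF_T (orb x n)" "OOCF_T (orb x n) < 1" using open01[of "n+1"] by auto
    then show ?thesis using S_single open01[OF \<open>n < N\<close>] by blast
  qed
  have "N - 1 < N" using N1 by simp
  have "OOCF_T (orb x (N-1)) = 1" using ON N1 by (metis O_Suc Suc_diff_1 less_le_trans zero_less_one)
  then obtain u v where uv: "u \<noteq> v" "S (orb x (N-1)) = {u, v}"
    using S_pair open01[OF \<open>N - 1 < N\<close>] by blast
  obtain s where s: "\<And>n. n < N - 1 \<Longrightarrow> S (orb x n) = {s n}"
    using single by metis
  have set: "{ds. fin_OOCF_exp x ds} = {ds. length ds = N \<and> (\<forall>n<N. ds ! n \<in> S (orb x n))}"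
  proof (intro equalityI subsetI)
    fix ds assume "ds \<in> {ds. fin_OOCF_exp x ds}"
    then have f: "length ds \<ge> 1" "\<forall>n<length ds. ds ! n \<in> S (orb x n) \<and> orb x n \<noteq> 1"
      "orb x (length ds) = 1" unfolding fin_iff by auto
    have "N \<le> length ds" using f(3) unfolding N_def by (rule Least_le)
    moreover have "\<not> N < length ds" using f(2) ON by auto
    ultimately have "length ds = N" by simp
    then show "ds \<in> {ds. length ds = N \<and> (\<forall>n<N. ds ! n \<in> S (orb x n))}" using f by auto
  next
    fix ds assume "ds \<in> {ds. length ds = N \<and> (\<forall>n<N. ds ! n \<in> S (orb x n))}"
    then show "ds \<in> {ds. fin_OOCF_exp x ds}" unfolding fin_iff using bef ON N1 by auto
  qed
  note G0 = G3[of N "\<lambda>n. S (orb x n)" s u v, OF N1 s uv(2,1)]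
  have G1': "{ds. length ds = N \<and> (\<forall>n<N. ds ! n \<in> S (orb x n))} =
      {map s [0..<N-1] @ [u], map s [0..<N-1] @ [v]}" using G0(1) by simp
  note G = G1' G0(2)
  have "{d. inf_OOCF_exp x d} = {}" unfolding inf_iff using ON by auto
  moreover have "card {ds. fin_OOCF_exp x ds} = 2" unfolding set G(1) using G(2) by simp
  moreover have "\<forall>ds es. fin_OOCF_exp x ds \<and> fin_OOCF_exp x es \<and> ds \<noteq> es \<longrightarrow>
                length ds = length es \<and> butlast ds = butlast es"
  proof (intro allI impI)
    fix ds es assume "fin_OOCF_exp x ds \<and> fin_OOCF_exp x es \<and> ds \<noteq> es"
    then have "ds \<in> {ds. fin_OOCF_exp x ds}" "es \<in> {ds. fin_OOCF_exp x ds}" by auto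
    then show "length ds = length es \<and> butlast ds = butlast es"
      unfolding set G(1) by auto
  qed
  ultimately show ?thesis by blast
qed

lemma part_irr:
  assumes x: "0 < x" "x < 1" "x \<notin> \<rat>"
  shows "(\<exists>!d. inf_OOCF_exp x d) \<and> {ds. fin_OOCF_exp x ds} = {}"
proof -
  have rng: "\<And>n. 0 \<le> orb x n \<and> orb x n \<le> 1" using O_range x by auto
  have irr: "\<And>n. orb x n \<notin> \<rat>"
  proof -
    fix n show "orb x n \<notin> \<rat>"
    proof (induction n)
      case 0 then show ?case using x by simp
    next
      case (Suc n)
      have "orb x n \<noteq> 1" using Suc by auto
      then have "orb x n < 1" using rng[of n] by simp
      then show ?case using T_rat[of "orb x n"] rng[of n] Suc by auto
    qed
  qed
  have o01: "\<And>n. 0 < orb x n \<and> orb x n < 1"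
  proof -
    fix n have "orb x n \<noteq> 0" "orb x n \<noteq> 1" using irr[of n] by auto
    then show "0 < orb x n \<and> orb x n < 1" using rng[of n] by auto
  qed
  have "\<forall>n. \<exists>s. S (orb x n) = {s}" using S_irr o01 irr by blast
  then obtain s where s: "\<And>n. S (orb x n) = {s n}" by metis
  have ne1: "\<And>n. orb x n \<noteq> 1" using o01 by (metis less_irrefl)
  have "{d. inf_OOCF_exp x d} = {d. \<forall>n. d n \<in> S (orb x n)}" unfolding inf_iff using ne1 by simp
  also have "\<dots> = {s}" by (rule G1) (rule s)
  finally have "{d. inf_OOCF_exp x d} = {s}" .
  then have "\<exists>!d. inf_OOCF_exp x d" by (metis mem_Collect_eq singleton_iff)
  moreover have "{ds. fin_OOCF_exp x ds} = {}" unfolding fin_iff using ne1 by auto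
  ultimately show ?thesis by blast
qed

theorem proposition2p1:
  shows "({d. inf_OOCF_exp 0 d} = {(\<lambda>_. (2, -1))})
    \<and> (\<forall>x::real. 0 < x \<and> x < 1 \<and> infty_rational x \<longrightarrow>
          card {d. inf_OOCF_exp x d} = 2
          \<and> {ds. fin_OOCF_exp x ds} = {}
          \<and> (\<forall>d. inf_OOCF_exp x d \<longrightarrow> (\<exists>N. \<forall>n\<ge>N. d n = (2, -1))))
    \<and> (\<forall>x::real. 0 < x \<and> x < 1 \<and> one_rational x \<longrightarrow>
          {d. inf_OOCF_exp x d} = {}
          \<and> card {ds. fin_OOCF_exp x ds} = 2
          \<and> (\<forall>ds es. fin_OOCF_exp x ds \<and> fin_OOCF_exp x es \<and> ds \<noteq> es \<longrightarrow>
                length ds = length es \<and> butlast ds = butlast es))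
    \<and> (\<forall>x::real. 0 < x \<and> x < 1 \<and> x \<notin> \<rat> \<longrightarrow>
          (\<exists>!d. inf_OOCF_exp x d) \<and> {ds. fin_OOCF_exp x ds} = {})"
  using part0 part_inf part_one part_irr by blast

end
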